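(* Let $n\ge 2$, $N=\{1,\dots,n\}$, for each $i\in N$ let $A_i$ be a nonempty finite set, $A=\prod_{i\in N}A_i$, $u_i:A\to\mathbb{R}$, $u(a)=(u_i(a))_{i\in N}$. Let $V=\operatorname{co}\{u(a):a\in A\}$ and $F^*=\prod_{i\in N}\left[\min_{a\in A}u_i(a),\ \max_{a\in A}u_i(a)\right]$. (1) If $V\neq F^*$, then for all $\delta,\delta'\in(0,1]$ and $T,T'\in\mathbb{N}$ with $\delta^T<(\delta')^{T'}$, we have $F(\delta',T')\subsetneq F(\delta,T)$. (2) If $V=F^*$, then $F(\delta,T)=V$ for all $\delta\in(0,1]$ and $T\in\mathbb{N}$.
   Context: $\operatorname{co}$ denotes convex hull. For $\delta\in(0,1]$, $T\in\mathbb{N}$ and $a^{[nT]}=(a^1,\dots,a^{nT})\in A^{nT}$, extend indices by $a^s=a^{s-nT}$ for $s\ge nT+1$, set $U_i(a^{[nT]})=\frac{1}{\sum_{k=1}^{nT}\delta^{k-1}}\sum_{k=1}^{nT}\delta^{k-1}u_i(a^{(i-1)T+k})$, $U=(U_i)_{i\in N}$, and $F(\delta,T)=\operatorname{co}\left(\bigcup_{a^{[nT]}\in A^{nT}}\{U(a^{[nT]})\}\right)$. (The paper writes $F(\Delta)$ for $F(\delta,T)$ with $\Delta=\delta^T$.) *)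

theory Defs
  imports "HOL-Analysis.Analysis"
begin

text \<open>Players form the finite type 'n; pos :: 'n => nat is the bijection onto {1..n}
  giving the numbering of players (player i has number pos i).\<close>

definition profiles :: "('n \<Rightarrow> 'a set) \<Rightarrow> ('n \<Rightarrow> 'a) set" where
  "profiles Act = Pi UNIV Act"

definition uvec :: "('n::finite \<Rightarrow> ('n \<Rightarrow> 'a) \<Rightarrow> real) \<Rightarrow> ('n \<Rightarrow> 'a) \<Rightarrow> real ^ 'n" where
  "uvec u a = (\<chi> i. u i a)"

text \<open>Periodic extension of indices 1..m: a^s = a^(s-m) for s >= m+1.\<close>
definition per_idx :: "nat \<Rightarrow> nat \<Rightarrow> nat" where
  "per_idx m s = (s - 1) mod m + 1"

definition Upay :: "('n::finite \<Rightarrow> nat) \<Rightarrow> ('n \<Rightarrow> ('n \<Rightarrow> 'a) \<Rightarrow> real) \<Rightarrow> real \<Rightarrow> nat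
    \<Rightarrow> (nat \<Rightarrow> ('n \<Rightarrow> 'a)) \<Rightarrow> real ^ 'n" where
  "Upay pos u \<delta> T s = (\<chi> i.
     (1 / (\<Sum>k=1..CARD('n)*T. \<delta> ^ (k - 1))) *
     (\<Sum>k=1..CARD('n)*T. \<delta> ^ (k - 1) * u i (s (per_idx (CARD('n)*T) ((pos i - 1) * T + k)))))"

definition Fset :: "('n::finite \<Rightarrow> nat) \<Rightarrow> ('n \<Rightarrow> 'a set) \<Rightarrow> ('n \<Rightarrow> ('n \<Rightarrow> 'a) \<Rightarrow> real)
    \<Rightarrow> real \<Rightarrow> nat \<Rightarrow> (real ^ 'n) set" where
  "Fset pos Act u \<delta> T = convex hull
     {Upay pos u \<delta> T s | s. \<forall>k\<in>{1..CARD('n)*T}. s k \<in> profiles Act}"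

definition Vset :: "('n::finite \<Rightarrow> 'a set) \<Rightarrow> ('n \<Rightarrow> ('n \<Rightarrow> 'a) \<Rightarrow> real) \<Rightarrow> (real ^ 'n) set" where
  "Vset Act u = convex hull (uvec u ` profiles Act)"

definition Fstar :: "('n::finite \<Rightarrow> 'a set) \<Rightarrow> ('n \<Rightarrow> ('n \<Rightarrow> 'a) \<Rightarrow> real) \<Rightarrow> (real ^ 'n) set" where
  "Fstar Act u = {x. \<forall>i. Min (u i ` profiles Act) \<le> x $ i \<and> x $ i \<le> Max (u i ` profiles Act)}"

end

theory Submission
  imports Defs
begin

definition cm :: "nat \<Rightarrow> nat \<Rightarrow> nat \<Rightarrow> nat" where
  "cm n a b = nat ((int a - int b) mod int n)"

lemma cm_int: "n > 0 \<Longrightarrow> int (cm n a b) = (int a - int b) mod int n"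
  unfolding cm_def by simp

lemma cm_lt: "n > 0 \<Longrightarrow> cm n a b < n"
  unfolding cm_def by (simp add: nat_less_iff)

lemma cm_cm: "n > 0 \<Longrightarrow> cm n (cm n a b) c = cm n (cm n a c) b"
proof -
  assume n: "n > 0"
  have "int (cm n (cm n a b) c) = int (cm n (cm n a c) b)"
    using n by (simp add: cm_int mod_diff_left_eq algebra_simps)
  then show ?thesis by simp
qed

lemma cm_zero: "a < n \<Longrightarrow> cm n a 0 = a"
  unfolding cm_def by simp

lemma cm_eq0: "a < n \<Longrightarrow> b < n \<Longrightarrow> cm n a b = 0 \<longleftrightarrow> a = b"
proof -
  assume a: "a < n" and b: "b < n"
  have "cm n a b = 0 \<longleftrightarrow> (int a - int b) mod int n = 0"
    unfolding cm_def using a by (simp add: nat_eq_iff)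
  also have "\<dots> \<longleftrightarrow> int n dvd (int a - int b)" by (rule mod_eq_0_iff_dvd)
  also have "\<dots> \<longleftrightarrow> a = b"
  proof
    assume "int n dvd (int a - int b)"
    moreover have "\<bar>int a - int b\<bar> < int n" using a b by linarith
    ultimately have "int a - int b = 0" by (meson dvd_abs_iff zdvd_not_zless zero_less_abs_iff)
    then show "a = b" by simp
  qed simp
  finally show ?thesis .
qed

lemma cm_bij: assumes n: "n > 0" shows "bij_betw (\<lambda>a. cm n a b) {..<n} {..<n}"
proof (rule bij_betw_byWitness[where f'="\<lambda>c. nat ((int c + int b) mod int n)"])
  show "\<forall>a\<in>{..<n}. nat ((int (cm n a b) + int b) mod int n) = a"
  proof
    fix a assume "a \<in> {..<n}"
    then show "nat ((int (cm n a b) + int b) mod int n) = a"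
      using n by (simp add: cm_int mod_add_left_eq)
  qed
  show "\<forall>a'\<in>{..<n}. cm n (nat ((int a' + int b) mod int n)) b = a'"
  proof
    fix a assume "a \<in> {..<n}"
    then show "cm n (nat ((int a + int b) mod int n)) b = a"
      using n unfolding cm_def by (simp add: mod_diff_left_eq)
  qed
  show "(\<lambda>a. cm n a b) ` {..<n} \<subseteq> {..<n}" using n cm_lt by auto
  show "(\<lambda>c. nat ((int c + int b) mod int n)) ` {..<n} \<subseteq> {..<n}" using n
    by (auto simp: nat_less_iff)
qed

lemma cm_pred: "n > 0 \<Longrightarrow> e < n \<Longrightarrow> e > 0 \<Longrightarrow> cm n e 1 = e - 1"
  unfolding cm_def by (simp add: of_nat_diff)

lemma cm_0_1: "n > 0 \<Longrightarrow> cm n 0 1 = n - 1"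
proof -
  assume n: "n > 0"
  have "(-1::int) mod int n = int n - 1"
    using n by (simp add: zmod_minus1)
  then show ?thesis unfolding cm_def using n by simp
qed

lemma bracket:
  fixes D :: real
  assumes n: "n > 0" and c: "c < n" and j: "j < n"
  shows "D ^ (cm n c j) - D * D ^ (cm n (cm n c 1) j) = (if c = j then 1 - D ^ n else 0)"
proof -
  have e: "cm n (cm n c 1) j = cm n (cm n c j) 1" by (rule cm_cm[OF n])
  have pw: "D * D ^ (m - 1) = D ^ m" if "m > 0" for m::nat
  proof -
    have "m = Suc (m - 1)" using that by simp
    then have "D ^ m = D ^ Suc (m - 1)" by (rule arg_cong)
    then show ?thesis by simp
  qed
  show ?thesis
  proof (cases "c = j")
    case True
    then have z: "cm n c j = 0" using cm_eq0[OF c j] by simp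
    then have "cm n (cm n c 1) j = n - 1" using e cm_0_1[OF n] by simp
    then show ?thesis using True z pw[OF n] by simp
  next
    case False
    then have h: "cm n c j > 0" using cm_eq0[OF c j] by simp
    have "cm n c j < n" using cm_lt n by blast
    then have "cm n (cm n c 1) j = cm n c j - 1" using cm_pred[OF n _ h] e by simp
    then show ?thesis using False pw[OF h] by simp
  qed
qed


lemma cm_shift: "n > 0 \<Longrightarrow> cm n (cm n d 1) (cm n k 1) = cm n d k"
proof -
  assume n: "n > 0"
  have "int (cm n (cm n d 1) (cm n k 1)) = int (cm n d k)"
    using n by (simp add: cm_int mod_diff_left_eq mod_diff_right_eq)
  then show ?thesis by simp
qed

lemma sum_cm_reindex:
  assumes n: "n > 0"
  shows "(\<Sum>k<n. g (cm n k j)) = (\<Sum>k<n. g k)"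
  using sum.reindex_bij_betw[OF cm_bij[OF n, of j], of g] .

lemma conv:
  fixes D D' :: real
  assumes n: "n > 0" and d: "d < n"
  shows "(\<Sum>k<n. (D' ^ k - D * D' ^ (cm n k 1)) * D ^ (cm n d k)) = (1 - D ^ n) * D' ^ d"
proof -
  have "(\<Sum>k<n. D' ^ (cm n k 1) * D ^ (cm n d k))
      = (\<Sum>k<n. D' ^ (cm n k 1) * D ^ (cm n (cm n d 1) (cm n k 1)))"
    using cm_shift[OF n] by simp
  also have "\<dots> = (\<Sum>k<n. D' ^ k * D ^ (cm n (cm n d 1) k))"
    using sum_cm_reindex[OF n, of "\<lambda>k. D' ^ k * D ^ (cm n (cm n d 1) k)" 1] .
  finally have s2: "(\<Sum>k<n. D' ^ (cm n k 1) * D ^ (cm n d k)) = (\<Sum>k<n. D' ^ k * D ^ (cm n (cm n d 1) k))" .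
  have "(\<Sum>k<n. (D' ^ k - D * D' ^ (cm n k 1)) * D ^ (cm n d k))
     = (\<Sum>k<n. D' ^ k * D ^ (cm n d k)) - D * (\<Sum>k<n. D' ^ (cm n k 1) * D ^ (cm n d k))"
    by (simp add: algebra_simps sum_subtractf sum_distrib_left)
  also have "\<dots> = (\<Sum>k<n. D' ^ k * (D ^ (cm n d k) - D * D ^ (cm n (cm n d 1) k)))"
    unfolding s2 by (simp add: algebra_simps sum_subtractf sum_distrib_left)
  also have "\<dots> = (\<Sum>k<n. D' ^ k * (if d = k then 1 - D ^ n else 0))"
  proof (rule sum.cong[OF refl])
    fix k assume "k \<in> {..<n}"
    then have k: "k < n" by simp
    show "D' ^ k * (D ^ (cm n d k) - D * D ^ (cm n (cm n d 1) k)) = D' ^ k * (if d = k then 1 - D ^ n else 0)"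
      by (subst bracket[OF n d k]) (rule refl)
  qed
  also have "\<dots> = (1 - D ^ n) * D' ^ d"
  proof -
    have "(\<Sum>k<n. D' ^ k * (if d = k then 1 - D ^ n else 0)) = (\<Sum>k<n. if d = k then D' ^ k * (1 - D ^ n) else 0)"
      by (rule sum.cong) auto
    also have "\<dots> = D' ^ d * (1 - D ^ n)" using d by (simp add: sum.delta')
    finally show ?thesis by simp
  qed
  finally show ?thesis .
qed

lemma musum:
  fixes D D' :: real
  assumes n: "n > 0"
  shows "(\<Sum>k<n. (D' ^ k - D * D' ^ (cm n k 1))) = (1 - D) * (\<Sum>k<n. D' ^ k)"
proof -
  have "(\<Sum>k<n. D' ^ (cm n k 1)) = (\<Sum>k<n. D' ^ k)"
    using sum_cm_reindex[OF n, of "\<lambda>k. D' ^ k" 1] .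
  note eq = this
  have "(\<Sum>k<n. (D' ^ k - D * D' ^ (cm n k 1))) = (\<Sum>k<n. D' ^ k) - D * (\<Sum>k<n. D' ^ (cm n k 1))"
    by (simp only: sum_subtractf sum_distrib_left)
  also have "\<dots> = (\<Sum>k<n. D' ^ k) - D * (\<Sum>k<n. D' ^ k)" unfolding eq ..
  also have "\<dots> = (1 - D) * (\<Sum>k<n. D' ^ k)" by (simp add: algebra_simps)
  finally show ?thesis .
qed

lemma modT: fixes x r :: int and n T :: int
  assumes "n > 0" "0 \<le> r" "r < T"
  shows "(x * T + r) mod (n * T) = (x mod n) * T + r"
proof -
  have T: "T > 0" using assms by simp
  have e: "x * T + r = (x div n) * (n * T) + ((x mod n) * T + r)"
    by (metis (no_types, lifting) add.assoc div_mult_mod_eq distrib_right mult.assoc mult.commute)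
  have lo: "0 \<le> (x mod n) * T + r" using assms T by simp
  have "x mod n \<le> n - 1" using assms by simp
  then have "(x mod n) * T \<le> (n - 1) * T" using T by (simp add: mult_right_mono)
  then have hi: "(x mod n) * T + r < n * T" using assms by (simp add: algebra_simps)
  show ?thesis unfolding e using lo hi
    by (simp add: mod_pos_pos_trivial)
qed

lemma triple:
  fixes p :: "'i \<Rightarrow> real" and f :: "'i \<Rightarrow> nat \<Rightarrow> nat \<Rightarrow> real"
  shows "(\<Sum>i\<in>A. p i * (c * (\<Sum>b\<in>B. \<Sum>r\<in>C. f i b r))) = c * (\<Sum>b\<in>B. \<Sum>r\<in>C. \<Sum>i\<in>A. p i * f i b r)"
proof -
  have "(\<Sum>i\<in>A. p i * (c * (\<Sum>b\<in>B. \<Sum>r\<in>C. f i b r))) = c * (\<Sum>i\<in>A. \<Sum>b\<in>B. \<Sum>r\<in>C. p i * f i b r)"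
    by (simp add: sum_distrib_left mult.left_commute)
  also have "(\<Sum>i\<in>A. \<Sum>b\<in>B. \<Sum>r\<in>C. p i * f i b r) = (\<Sum>b\<in>B. \<Sum>i\<in>A. \<Sum>r\<in>C. p i * f i b r)"
    by (rule sum.swap)
  also have "\<dots> = (\<Sum>b\<in>B. \<Sum>r\<in>C. \<Sum>i\<in>A. p i * f i b r)"
    by (rule sum.cong[OF refl], rule sum.swap)
  finally show ?thesis .
qed

lemma G_step1:
  fixes \<delta> :: real and g :: "nat \<Rightarrow> real"
  assumes m: "m > 0" and a: "a < m"
  shows "(\<Sum>k=1..m. \<delta> ^ (k - 1) * g (per_idx m (a + k))) = (\<Sum>z<m. \<delta> ^ (cm m z a) * g (z + 1))"
proof -
  let ?h = "\<lambda>k. (a + k - 1) mod m"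
  have bij: "bij_betw ?h {1..m} {..<m}"
  proof (rule bij_betw_byWitness[where f'="\<lambda>z. cm m z a + 1"])
    show "\<forall>k\<in>{1..m}. cm m ((a + k - 1) mod m) a + 1 = k"
    proof
      fix k assume k: "k \<in> {1..m}"
      have "int (cm m ((a + k - 1) mod m) a) = int (k - 1)"
        using k m by (simp add: cm_int zmod_int of_nat_diff mod_diff_left_eq)
      then show "cm m ((a + k - 1) mod m) a + 1 = k" using k by simp
    qed
    show "\<forall>z\<in>{..<m}. (a + (cm m z a + 1) - 1) mod m = z"
    proof
      fix z assume z: "z \<in> {..<m}"
      have "int ((a + (cm m z a + 1) - 1) mod m) = int z"
        using z m by (simp add: cm_int zmod_int mod_add_right_eq)
      then show "(a + (cm m z a + 1) - 1) mod m = z" by simp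
    qed
    show "?h ` {1..m} \<subseteq> {..<m}" using m by auto
    show "(\<lambda>z. cm m z a + 1) ` {..<m} \<subseteq> {1..m}" using m cm_lt[OF m] by (auto simp: Suc_leI)
  qed
  have "(\<Sum>z<m. \<delta> ^ (cm m z a) * g (z + 1)) = (\<Sum>k\<in>{1..m}. \<delta> ^ (cm m (?h k) a) * g (?h k + 1))"
    using sum.reindex_bij_betw[OF bij, of "\<lambda>z. \<delta> ^ (cm m z a) * g (z + 1)"] by simp
  also have "\<dots> = (\<Sum>k=1..m. \<delta> ^ (k - 1) * g (per_idx m (a + k)))"
  proof (rule sum.cong[OF refl])
    fix k assume k: "k \<in> {1..m}"
    have "int (cm m ((a + k - 1) mod m) a) = int (k - 1)"
      using k m by (simp add: cm_int zmod_int of_nat_diff mod_diff_left_eq)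
    then have c: "cm m (?h k) a = k - 1" by simp
    have p: "per_idx m (a + k) = ?h k + 1" unfolding per_idx_def using k by simp
    show "\<delta> ^ (cm m (?h k) a) * g (?h k + 1) = \<delta> ^ (k - 1) * g (per_idx m (a + k))"
      unfolding c p ..
  qed
  finally show ?thesis by simp
qed

lemma G_step2:
  fixes F :: "nat \<Rightarrow> real"
  shows "(\<Sum>z<n*T. F z) = (\<Sum>b<n. \<Sum>r<T. F (b * T + r))"
proof -
  have "(\<Sum>z<n*T. F z) = (\<Sum>b<n. sum F {b*T..<b*T+T})"
    by (rule sum.nat_group[symmetric])
  also have "\<dots> = (\<Sum>b<n. \<Sum>r<T. F (b * T + r))"
  proof (rule sum.cong[OF refl])
    fix b
    have "sum F {0 + b*T..<T + b*T} = (\<Sum>r\<in>{0..<T}. F (r + b*T))"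
      by (rule sum.shift_bounds_nat_ivl)
    then show "sum F {b*T..<b*T+T} = (\<Sum>r<T. F (b * T + r))"
      by (simp add: add.commute atLeast0LessThan)
  qed
  finally show ?thesis .
qed

lemma G_exp:
  assumes n: "n > 0" and T: "T > 0" and r: "r < T"
  shows "cm (n*T) (b * T + r) (j * T) = cm n b j * T + r"
proof -
  have "int (cm (n*T) (b * T + r) (j * T)) = ((int b - int j) * int T + int r) mod (int n * int T)"
    using n T by (simp add: cm_int algebra_simps)
  also have "\<dots> = ((int b - int j) mod int n) * int T + int r"
    by (rule modT) (use n r in auto)
  also have "\<dots> = int (cm n b j * T + r)" using n by (simp add: cm_int)
  finally show ?thesis by (simp only: of_nat_eq_iff)
qed

lemma G:
  fixes \<delta> :: real and g :: "nat \<Rightarrow> real"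
  assumes n: "n > 0" and T: "T > 0" and j: "j < n"
  shows "(\<Sum>k=1..n*T. \<delta> ^ (k - 1) * g (per_idx (n*T) (j*T + k)))
       = (\<Sum>b<n. \<Sum>r<T. \<delta> ^ r * (\<delta> ^ T) ^ (cm n b j) * g (b*T + r + 1))"
proof -
  have m: "n * T > 0" using n T by simp
  have a: "j * T < n * T" using j T by simp
  have "(\<Sum>k=1..n*T. \<delta> ^ (k - 1) * g (per_idx (n*T) (j*T + k)))
      = (\<Sum>z<n*T. \<delta> ^ (cm (n*T) z (j*T)) * g (z + 1))"
    by (rule G_step1[OF m a])
  also have "\<dots> = (\<Sum>b<n. \<Sum>r<T. \<delta> ^ (cm (n*T) (b*T + r) (j*T)) * g (b*T + r + 1))"
    by (rule G_step2)
  also have "\<dots> = (\<Sum>b<n. \<Sum>r<T. \<delta> ^ r * (\<delta> ^ T) ^ (cm n b j) * g (b*T + r + 1))"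
  proof (intro sum.cong refl)
    fix b r assume "r \<in> {..<T}"
    then have r: "r < T" by simp
    show "\<delta> ^ (cm (n*T) (b*T + r) (j*T)) * g (b*T + r + 1) = \<delta> ^ r * (\<delta> ^ T) ^ (cm n b j) * g (b*T + r + 1)"
      unfolding G_exp[OF n T r] by (simp add: power_add power_mult[symmetric] mult.commute)
  qed
  finally show ?thesis .
qed

definition Xf :: "('n::finite \<Rightarrow> nat) \<Rightarrow> ('n \<Rightarrow> ('n \<Rightarrow> 'a) \<Rightarrow> real) \<Rightarrow> real \<Rightarrow> real^'n \<Rightarrow> nat \<Rightarrow> ('n \<Rightarrow> 'a) \<Rightarrow> real" where
  "Xf pos u D p b a = (\<Sum>i\<in>UNIV. p$i * D ^ (cm CARD('n) b (pos i - 1)) * u i a)"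

definition Wf :: "('n::finite \<Rightarrow> nat) \<Rightarrow> ('n \<Rightarrow> 'a set) \<Rightarrow> ('n \<Rightarrow> ('n \<Rightarrow> 'a) \<Rightarrow> real) \<Rightarrow> real \<Rightarrow> real^'n \<Rightarrow> nat \<Rightarrow> real" where
  "Wf pos Act u D p b = Max (Xf pos u D p b ` profiles Act)"

definition hf :: "('n::finite \<Rightarrow> nat) \<Rightarrow> ('n \<Rightarrow> 'a set) \<Rightarrow> ('n \<Rightarrow> ('n \<Rightarrow> 'a) \<Rightarrow> real) \<Rightarrow> real \<Rightarrow> real^'n \<Rightarrow> real" where
  "hf pos Act u D p = (\<Sum>b<CARD('n). Wf pos Act u D p b) / (\<Sum>b<CARD('n). D ^ b)"

lemma prof_fin: fixes Act :: "'n::finite \<Rightarrow> 'a set" shows "(\<And>i. finite (Act i)) \<Longrightarrow> finite (profiles Act)"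
proof -
  assume f: "\<And>i. finite (Act i)"
  have "finite (Pi\<^sub>E UNIV Act)" by (rule finite_PiE) (use f in auto)
  then show ?thesis unfolding profiles_def PiE_UNIV_domain .
qed

lemma prof_ne: "(\<And>i. Act i \<noteq> {}) \<Longrightarrow> profiles Act \<noteq> {}"
  unfolding profiles_def by (simp add: Pi_eq_empty)

lemma inner_vec_sum: "inner (p::real^'n) x = (\<Sum>i\<in>UNIV. p$i * x$i)"
  unfolding inner_vec_def by simp

lemma S_formula:
  fixes \<delta> :: real
  assumes n: "n > 0" and T: "T > 0"
  shows "(\<Sum>k=1..n*T. \<delta> ^ (k - 1)) = (\<Sum>r<T. \<delta> ^ r) * (\<Sum>b<n. (\<delta> ^ T) ^ b)"
proof -
  have "(\<Sum>k=1..n*T. \<delta> ^ (k - 1)) = (\<Sum>k=1..n*T. \<delta> ^ (k - 1) * (\<lambda>z. 1) (per_idx (n*T) (0*T + k)))"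
    by simp
  also have "\<dots> = (\<Sum>b<n. \<Sum>r<T. \<delta> ^ r * (\<delta> ^ T) ^ (cm n b 0) * (\<lambda>z. 1) (b*T + r + 1))"
    by (rule G[OF n T n])
  also have "\<dots> = (\<Sum>b<n. \<Sum>r<T. \<delta> ^ r * (\<delta> ^ T) ^ b)"
    by (intro sum.cong refl) (simp add: cm_zero)
  also have "\<dots> = (\<Sum>r<T. \<delta> ^ r) * (\<Sum>b<n. (\<delta> ^ T) ^ b)"
    unfolding sum_product by (rule sum.swap)
  finally show ?thesis .
qed

locale game =
  fixes pos :: "'n::finite \<Rightarrow> nat" and Act :: "'n \<Rightarrow> 'a set" and u :: "'n \<Rightarrow> ('n \<Rightarrow> 'a) \<Rightarrow> real"
  assumes pos: "bij_betw pos UNIV {1..CARD('n)}"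
    and fin: "\<And>i. finite (Act i)"
    and ne: "\<And>i. Act i \<noteq> {}"
begin

lemma npos: "CARD('n) > 0" by simp
lemma lt_ne: "{..<CARD('n)} \<noteq> {}" using npos by (metis lessThan_iff empty_iff)

lemma pos_lt: "pos i - 1 < CARD('n)"
proof -
  have "pos i \<in> {1..CARD('n)}" by (rule bij_betw_apply[OF pos]) simp
  then show ?thesis by auto
qed

lemma inner_Upay:
  fixes \<delta> :: real
  assumes T: "T > 0"
  shows "inner p (Upay pos u \<delta> T s) = (1 / (\<Sum>k=1..CARD('n)*T. \<delta> ^ (k - 1))) *
     (\<Sum>b<CARD('n). \<Sum>r<T. \<delta> ^ r * Xf pos u (\<delta> ^ T) p b (s (b*T + r + 1)))"
proof -
  let ?n = "CARD('n)"
  let ?S = "(\<Sum>k=1..?n*T. \<delta> ^ (k - 1))"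
  have c: "Upay pos u \<delta> T s $ i = (1 / ?S) * (\<Sum>b<?n. \<Sum>r<T. \<delta> ^ r * (\<delta> ^ T) ^ (cm ?n b (pos i - 1)) * u i (s (b*T + r + 1)))" for i
    unfolding Upay_def vec_lambda_beta
    by (subst G[OF npos T pos_lt, of \<delta> "\<lambda>z. u i (s z)"]) (rule refl)
  have "inner p (Upay pos u \<delta> T s) = (\<Sum>i\<in>UNIV. p$i * ((1 / ?S) * (\<Sum>b<?n. \<Sum>r<T. \<delta> ^ r * (\<delta> ^ T) ^ (cm ?n b (pos i - 1)) * u i (s (b*T + r + 1)))))"
    unfolding inner_vec_sum c ..
  also have "\<dots> = (1 / ?S) * (\<Sum>b<?n. \<Sum>r<T. \<Sum>i\<in>UNIV. p$i * (\<delta> ^ r * (\<delta> ^ T) ^ (cm ?n b (pos i - 1)) * u i (s (b*T + r + 1))))"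
    by (rule triple)
  also have "\<dots> = (1 / ?S) * (\<Sum>b<?n. \<Sum>r<T. \<delta> ^ r * Xf pos u (\<delta> ^ T) p b (s (b*T + r + 1)))"
  proof -
    have "(\<Sum>i\<in>UNIV. p$i * (\<delta> ^ r * (\<delta> ^ T) ^ (cm ?n b (pos i - 1)) * u i (s (b*T + r + 1))))
        = \<delta> ^ r * Xf pos u (\<delta> ^ T) p b (s (b*T + r + 1))" for b r
      unfolding Xf_def sum_distrib_left by (rule sum.cong[OF refl]) (simp only: mult.assoc mult.left_commute)
    then show ?thesis by (simp only:)
  qed
  finally show ?thesis .
qed


lemma A_fin: "finite (profiles Act)" by (rule prof_fin) (rule fin)
lemma A_ne: "profiles Act \<noteq> {}" by (rule prof_ne) (rule ne)

lemma Xf_le_Wf: "a \<in> profiles Act \<Longrightarrow> Xf pos u D p b a \<le> Wf pos Act u D p b"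
  unfolding Wf_def by (rule Max_ge) (simp_all add: A_fin)

lemma Wf_attained: "\<exists>a\<in>profiles Act. Xf pos u D p b a = Wf pos Act u D p b"
proof -
  have "Wf pos Act u D p b \<in> Xf pos u D p b ` profiles Act"
    unfolding Wf_def by (rule Max_in) (simp_all add: A_fin A_ne)
  then show ?thesis by auto
qed

lemma idx_range: fixes b n r T :: nat shows "b < n \<Longrightarrow> r < T \<Longrightarrow> b * T + r + 1 \<in> {1..n*T}"
proof -
  assume b: "b < n" and r: "r < T"
  have "b * T + r + 1 \<le> Suc b * T" using r by simp
  also have "\<dots> \<le> n * T" using b by (intro mult_le_mono1) simp
  finally show ?thesis by simp
qed

lemma hf_eq:
  fixes \<delta> :: real
  assumes T: "T > 0" and d: "\<delta> > 0"
  shows "(1 / (\<Sum>k=1..CARD('n)*T. \<delta> ^ (k - 1))) * (\<Sum>b<CARD('n). \<Sum>r<T. \<delta> ^ r * Wf pos Act u (\<delta> ^ T) p b)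
     = hf pos Act u (\<delta> ^ T) p"
proof -
  let ?R = "(\<Sum>r<T. \<delta> ^ r)" and ?Q = "(\<Sum>b<CARD('n). (\<delta> ^ T) ^ b)"
  have R: "?R > 0" using T d by (intro sum_pos) auto
  have Q: "?Q > 0" using d by (intro sum_pos lt_ne) auto
  have "(\<Sum>b<CARD('n). \<Sum>r<T. \<delta> ^ r * Wf pos Act u (\<delta> ^ T) p b) = ?R * (\<Sum>b<CARD('n). Wf pos Act u (\<delta> ^ T) p b)"
    by (simp add: sum_distrib_left sum_distrib_right)
  then show ?thesis unfolding S_formula[OF npos T] hf_def using R Q by simp
qed

lemma upper:
  fixes \<delta> :: real
  assumes T: "T > 0" and d: "\<delta> > 0" and s: "\<forall>k\<in>{1..CARD('n)*T}. s k \<in> profiles Act"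
  shows "inner p (Upay pos u \<delta> T s) \<le> hf pos Act u (\<delta> ^ T) p"
proof -
  have S: "(\<Sum>k=1..CARD('n)*T. \<delta> ^ (k - 1)) > 0"
    unfolding S_formula[OF npos T] using T d by (intro mult_pos_pos sum_pos lt_ne) auto
  have "(\<Sum>b<CARD('n). \<Sum>r<T. \<delta> ^ r * Xf pos u (\<delta> ^ T) p b (s (b*T + r + 1)))
      \<le> (\<Sum>b<CARD('n). \<Sum>r<T. \<delta> ^ r * Wf pos Act u (\<delta> ^ T) p b)"
  proof (intro sum_mono mult_left_mono)
    fix b r assume b: "b \<in> {..<CARD('n)}" and r: "r \<in> {..<T}"
    have "s (b*T + r + 1) \<in> profiles Act" using s idx_range[of b "CARD('n)" r T] b r by simp
    then show "Xf pos u (\<delta> ^ T) p b (s (b*T + r + 1)) \<le> Wf pos Act u (\<delta> ^ T) p b" by (rule Xf_le_Wf)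
    show "0 \<le> \<delta> ^ r" using d by simp
  qed
  then have "inner p (Upay pos u \<delta> T s) \<le> (1 / (\<Sum>k=1..CARD('n)*T. \<delta> ^ (k - 1))) * (\<Sum>b<CARD('n). \<Sum>r<T. \<delta> ^ r * Wf pos Act u (\<delta> ^ T) p b)"
    unfolding inner_Upay[OF T] using S by (intro mult_left_mono) auto
  then show ?thesis unfolding hf_eq[OF T d] .
qed

lemma attain:
  fixes \<delta> :: real
  assumes T: "T > 0" and d: "\<delta> > 0"
  shows "\<exists>s. (\<forall>k. s k \<in> profiles Act) \<and> inner p (Upay pos u \<delta> T s) = hf pos Act u (\<delta> ^ T) p"
proof -
  have "\<forall>b. \<exists>a. a \<in> profiles Act \<and> Xf pos u (\<delta> ^ T) p b a = Wf pos Act u (\<delta> ^ T) p b"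
    using Wf_attained by blast
  then obtain am where am: "\<And>b. am b \<in> profiles Act \<and> Xf pos u (\<delta> ^ T) p b (am b) = Wf pos Act u (\<delta> ^ T) p b"
    by metis
  define s where "s k = am ((k - 1) div T)" for k
  have sv: "s (Suc (b*T + r)) = am b" if "r < T" for b r
    unfolding s_def using that by simp
  have "inner p (Upay pos u \<delta> T s) = (1 / (\<Sum>k=1..CARD('n)*T. \<delta> ^ (k - 1))) * (\<Sum>b<CARD('n). \<Sum>r<T. \<delta> ^ r * Wf pos Act u (\<delta> ^ T) p b)"
    unfolding inner_Upay[OF T]
    by (intro arg_cong[where f="\<lambda>x. _ * x"] sum.cong refl) (simp add: sv am)
  then show ?thesis unfolding hf_eq[OF T d] by (intro exI[of _ s]) (use am s_def in auto)
qed

lemma hull_upper: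
  fixes \<delta> :: real
  assumes T: "T > 0" and d: "\<delta> > 0" and x: "x \<in> Fset pos Act u \<delta> T"
  shows "inner p x \<le> hf pos Act u (\<delta> ^ T) p"
proof -
  have "Fset pos Act u \<delta> T \<subseteq> {x. inner p x \<le> hf pos Act u (\<delta> ^ T) p}"
    unfolding Fset_def
    by (rule hull_minimal) (auto intro: upper[OF T d] simp: convex_halfspace_le)
  then show ?thesis using x by auto
qed

lemma Upay_restrict:
  assumes T: "T > 0"
  shows "Upay pos u \<delta> T s = Upay pos u \<delta> T (restrict s {1..CARD('n)*T})"
proof -
  have m: "CARD('n) * T > 0" using T by simp
  have pr: "per_idx (CARD('n)*T) x \<in> {1..CARD('n)*T}" for x
    unfolding per_idx_def using m by (auto simp: Suc_leI)
  show ?thesis unfolding Upay_def using pr by simp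
qed

lemma gen_finite:
  assumes T: "T > 0"
  shows "finite {Upay pos u \<delta> T s | s. \<forall>k\<in>{1..CARD('n)*T}. s k \<in> profiles Act}"
proof -
  have "{Upay pos u \<delta> T s | s. \<forall>k\<in>{1..CARD('n)*T}. s k \<in> profiles Act}
     \<subseteq> Upay pos u \<delta> T ` (Pi\<^sub>E {1..CARD('n)*T} (\<lambda>_. profiles Act))"
  proof
    fix x assume "x \<in> {Upay pos u \<delta> T s | s. \<forall>k\<in>{1..CARD('n)*T}. s k \<in> profiles Act}"
    then obtain s where x: "x = Upay pos u \<delta> T s" and s: "\<forall>k\<in>{1..CARD('n)*T}. s k \<in> profiles Act" by blast
    have "restrict s {1..CARD('n)*T} \<in> Pi\<^sub>E {1..CARD('n)*T} (\<lambda>_. profiles Act)" using s by simp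
    then show "x \<in> Upay pos u \<delta> T ` (Pi\<^sub>E {1..CARD('n)*T} (\<lambda>_. profiles Act))"
      unfolding x Upay_restrict[OF T, of \<delta> s] by (rule imageI)
  qed
  moreover have "finite (Pi\<^sub>E {1..CARD('n)*T} (\<lambda>_. profiles Act))"
    by (rule finite_PiE) (simp_all add: A_fin)
  ultimately show ?thesis by (meson finite_surj)
qed

lemma Fset_compact: "T > 0 \<Longrightarrow> compact (Fset pos Act u \<delta> T)"
  unfolding Fset_def by (rule finite_imp_compact_convex_hull) (rule gen_finite)


end

context game begin
lemma jj_inj: "pos i - 1 = pos i' - 1 \<Longrightarrow> i = i'"
proof -
  assume h: "pos i - 1 = pos i' - 1"
  have "pos i \<in> {1..CARD('n)}" "pos i' \<in> {1..CARD('n)}" by (rule bij_betw_apply[OF pos], simp)+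
  then have "1 \<le> pos i" "1 \<le> pos i'" by simp_all
  then have "pos i = pos i'" using h by linarith
  moreover have "inj pos" using pos by (simp add: bij_betw_def)
  ultimately show "i = i'" by (simp add: inj_eq)
qed

lemma sum_eq_le_imp:
  fixes f g :: "'b \<Rightarrow> real"
  assumes "finite A" "\<forall>x\<in>A. f x \<le> g x" "sum f A = sum g A" "x \<in> A"
  shows "f x = g x"
proof -
  have "sum (\<lambda>x. g x - f x) A = 0" using assms by (simp add: sum_subtractf)
  moreover have nn: "\<And>x. x \<in> A \<Longrightarrow> 0 \<le> g x - f x" using assms(2) by simp
  ultimately have "\<forall>x\<in>A. g x - f x = 0" using sum_nonneg_eq_0_iff[OF assms(1), of "\<lambda>x. g x - f x"] by blast
  then show ?thesis using assms(4) by simp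
qed

lemma X_conv:
  fixes D D' :: real
  assumes b: "b < CARD('n)"
  shows "(1 - D ^ CARD('n)) * Xf pos u D' p b a
     = (\<Sum>k<CARD('n). (D' ^ k - D * D' ^ (cm CARD('n) k 1)) * Xf pos u D p (cm CARD('n) b k) a)"
proof -
  let ?n = "CARD('n)"
  let ?m = "\<lambda>k. D' ^ k - D * D' ^ (cm ?n k 1)"
  have "(\<Sum>k<?n. ?m k * Xf pos u D p (cm ?n b k) a)
     = (\<Sum>k<?n. \<Sum>i\<in>UNIV. ?m k * (p$i * D ^ (cm ?n (cm ?n b k) (pos i - 1)) * u i a))"
    unfolding Xf_def sum_distrib_left ..
  also have "\<dots> = (\<Sum>i\<in>UNIV. \<Sum>k<?n. ?m k * (p$i * D ^ (cm ?n (cm ?n b k) (pos i - 1)) * u i a))"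
    by (rule sum.swap)
  also have "\<dots> = (\<Sum>i\<in>UNIV. (p$i * u i a) * (\<Sum>k<?n. ?m k * D ^ (cm ?n (cm ?n b (pos i - 1)) k)))"
  proof (rule sum.cong[OF refl])
    fix i
    have "(\<Sum>k<?n. ?m k * (p$i * D ^ (cm ?n (cm ?n b k) (pos i - 1)) * u i a))
        = (\<Sum>k<?n. (p$i * u i a) * (?m k * D ^ (cm ?n (cm ?n b (pos i - 1)) k)))"
    proof (rule sum.cong[OF refl])
      fix k
      have e: "cm ?n (cm ?n b k) (pos i - 1) = cm ?n (cm ?n b (pos i - 1)) k" by (rule cm_cm[OF npos])
      show "?m k * (p$i * D ^ (cm ?n (cm ?n b k) (pos i - 1)) * u i a)
          = (p$i * u i a) * (?m k * D ^ (cm ?n (cm ?n b (pos i - 1)) k))"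
        unfolding e by (simp only: mult.assoc mult.commute mult.left_commute)
    qed
    then show "(\<Sum>k<?n. ?m k * (p$i * D ^ (cm ?n (cm ?n b k) (pos i - 1)) * u i a))
        = (p$i * u i a) * (\<Sum>k<?n. ?m k * D ^ (cm ?n (cm ?n b (pos i - 1)) k))"
      by (simp only: sum_distrib_left)
  qed
  also have "\<dots> = (\<Sum>i\<in>UNIV. (p$i * u i a) * ((1 - D ^ ?n) * D' ^ (cm ?n b (pos i - 1))))"
    by (intro sum.cong refl) (simp only: conv[OF npos cm_lt[OF npos]])
  also have "\<dots> = (1 - D ^ ?n) * Xf pos u D' p b a"
    unfolding Xf_def sum_distrib_left
    by (intro sum.cong refl) (simp only: mult.assoc mult.commute mult.left_commute)
  finally show ?thesis by simp
qed

lemma W_conv: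
  fixes D D' :: real
  assumes b: "b < CARD('n)" and mu: "\<forall>k<CARD('n). D' ^ k - D * D' ^ (cm CARD('n) k 1) \<ge> 0"
    and Dn: "1 - D ^ CARD('n) \<ge> 0"
  shows "(1 - D ^ CARD('n)) * Wf pos Act u D' p b
     \<le> (\<Sum>k<CARD('n). (D' ^ k - D * D' ^ (cm CARD('n) k 1)) * Wf pos Act u D p (cm CARD('n) b k))"
proof -
  obtain a where a: "a \<in> profiles Act" "Xf pos u D' p b a = Wf pos Act u D' p b"
    using Wf_attained by blast
  have "(1 - D ^ CARD('n)) * Wf pos Act u D' p b = (\<Sum>k<CARD('n). (D' ^ k - D * D' ^ (cm CARD('n) k 1)) * Xf pos u D p (cm CARD('n) b k) a)"
    unfolding a(2)[symmetric] by (rule X_conv[OF b])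
  also have "\<dots> \<le> (\<Sum>k<CARD('n). (D' ^ k - D * D' ^ (cm CARD('n) k 1)) * Wf pos Act u D p (cm CARD('n) b k))"
    by (intro sum_mono mult_left_mono Xf_le_Wf a(1)) (use mu in auto)
  finally show ?thesis .
qed

lemma sum_conv_W:
  fixes D D' :: real
  shows "(\<Sum>b<CARD('n). \<Sum>k<CARD('n). (D' ^ k - D * D' ^ (cm CARD('n) k 1)) * Wf pos Act u D p (cm CARD('n) b k))
       = ((1 - D) * (\<Sum>k<CARD('n). D' ^ k)) * (\<Sum>b<CARD('n). Wf pos Act u D p b)"
proof -
  let ?n = "CARD('n)"
  have "(\<Sum>b<?n. \<Sum>k<?n. (D' ^ k - D * D' ^ (cm ?n k 1)) * Wf pos Act u D p (cm ?n b k))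
     = (\<Sum>k<?n. \<Sum>b<?n. (D' ^ k - D * D' ^ (cm ?n k 1)) * Wf pos Act u D p (cm ?n b k))"
    by (rule sum.swap)
  also have "\<dots> = (\<Sum>k<?n. (D' ^ k - D * D' ^ (cm ?n k 1)) * (\<Sum>b<?n. Wf pos Act u D p b))"
  proof (rule sum.cong[OF refl])
    fix k
    have "(\<Sum>b<?n. (D' ^ k - D * D' ^ (cm ?n k 1)) * Wf pos Act u D p (cm ?n b k))
        = (D' ^ k - D * D' ^ (cm ?n k 1)) * (\<Sum>b<?n. Wf pos Act u D p (cm ?n b k))"
      by (rule sum_distrib_left[symmetric])
    also have "\<dots> = (D' ^ k - D * D' ^ (cm ?n k 1)) * (\<Sum>b<?n. Wf pos Act u D p b)"
      by (subst sum_cm_reindex[OF npos]) (rule refl)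
    finally show "(\<Sum>b<?n. (D' ^ k - D * D' ^ (cm ?n k 1)) * Wf pos Act u D p (cm ?n b k))
        = (D' ^ k - D * D' ^ (cm ?n k 1)) * (\<Sum>b<?n. Wf pos Act u D p b)" .
  qed
  also have "\<dots> = (\<Sum>k<?n. (D' ^ k - D * D' ^ (cm ?n k 1))) * (\<Sum>b<?n. Wf pos Act u D p b)"
    by (rule sum_distrib_right[symmetric])
  also have "\<dots> = ((1 - D) * (\<Sum>k<?n. D' ^ k)) * (\<Sum>b<?n. Wf pos Act u D p b)"
  proof -
    have "(\<Sum>k<?n. (D' ^ k - D * D' ^ (cm ?n k 1))) = (1 - D) * (\<Sum>k<?n. D' ^ k)"
      by (rule musum) simp
    then show ?thesis by (rule arg_cong[where f="\<lambda>x. x * _"])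
  qed
  finally show ?thesis .
qed

lemma mu_pos:
  fixes D D' :: real
  assumes D: "0 < D" "D < D'" "D' \<le> 1" and k: "k < CARD('n)"
  shows "D' ^ k - D * D' ^ (cm CARD('n) k 1) > 0"
proof (cases "k = 0")
  case True
  have "D' ^ (CARD('n) - 1) \<le> 1" using D by (simp add: power_le_one)
  then have m1: "D * D' ^ (CARD('n) - 1) \<le> D * 1" using D by (intro mult_left_mono) auto
  have "D * D' ^ (CARD('n) - 1) < 1" using m1 D by linarith
  then show ?thesis using True cm_0_1[OF npos] by simp
next
  case False
  then have c: "cm CARD('n) k 1 = k - 1" using cm_pred[OF npos k] by simp
  have "D' ^ k = D' ^ (Suc (k - 1))" using False by simp
  also have "\<dots> = D' * D' ^ (k - 1)" by (rule power_Suc)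
  finally have e: "D' ^ k = D' * D' ^ (k - 1)" .
  have X: "D' ^ (k - 1) > 0" using D by simp
  have "D' ^ k - D * D' ^ (k - 1) = (D' - D) * D' ^ (k - 1)" unfolding e by (simp add: algebra_simps)
  also have "\<dots> > 0" using X D by simp
  finally show ?thesis unfolding c .
qed

end

lemma cm_inv: "n > 0 \<Longrightarrow> c < n \<Longrightarrow> cm n 0 (cm n 0 c) = c"
proof -
  assume n: "n > 0" and c: "c < n"
  have "int (cm n 0 (cm n 0 c)) = (0 - (0 - int c) mod int n) mod int n"
    using n by (simp add: cm_int)
  also have "\<dots> = int c mod int n" by (simp add: mod_diff_right_eq mod_minus_eq)
  also have "\<dots> = int c" using c by simp
  finally show ?thesis by (simp only: of_nat_eq_iff)
qed

context game begin

lemma Dn_lt: "0 < D \<Longrightarrow> D < (1::real) \<Longrightarrow> D ^ CARD('n) < 1"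
  using power_less_one_iff[of D "CARD('n)"] npos by simp

lemma hf_aux:
  fixes D D' :: real
  assumes D: "0 < D" "D < D'" "D' \<le> 1"
  shows "(1 - D ^ CARD('n)) * (\<Sum>b<CARD('n). Wf pos Act u D' p b)
     \<le> ((1 - D) * (\<Sum>k<CARD('n). D' ^ k)) * (\<Sum>b<CARD('n). Wf pos Act u D p b)"
proof -
  let ?n = "CARD('n)"
  have mu: "\<forall>k<?n. D' ^ k - D * D' ^ (cm ?n k 1) \<ge> 0" using mu_pos[OF D] by (simp add: less_imp_le)
  have Dn: "1 - D ^ ?n \<ge> 0" using Dn_lt[of D] D by simp
  have "(1 - D ^ ?n) * (\<Sum>b<?n. Wf pos Act u D' p b) = (\<Sum>b<?n. (1 - D ^ ?n) * Wf pos Act u D' p b)"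
    by (rule sum_distrib_left)
  also have "\<dots> \<le> (\<Sum>b<?n. \<Sum>k<?n. (D' ^ k - D * D' ^ (cm ?n k 1)) * Wf pos Act u D p (cm ?n b k))"
    by (rule sum_mono) (rule W_conv[OF _ mu Dn], simp)
  also have "\<dots> = ((1 - D) * (\<Sum>k<?n. D' ^ k)) * (\<Sum>b<?n. Wf pos Act u D p b)"
    by (rule sum_conv_W)
  finally show ?thesis .
qed

lemma hf_mono:
  fixes D D' :: real
  assumes D: "0 < D" "D < D'" "D' \<le> 1"
  shows "hf pos Act u D' p \<le> hf pos Act u D p"
proof -
  let ?n = "CARD('n)"
  let ?S = "\<Sum>b<?n. D ^ b" and ?S' = "\<Sum>b<?n. D' ^ b"
  let ?W = "\<Sum>b<?n. Wf pos Act u D p b" and ?W' = "\<Sum>b<?n. Wf pos Act u D' p b"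
  have S: "?S > 0" using D by (intro sum_pos lt_ne) auto
  have S': "?S' > 0" using D by (intro sum_pos lt_ne) auto
  have e: "1 - D ^ ?n = (1 - D) * ?S" by (rule one_diff_power_eq)
  have "(1 - D) * (?S * ?W') \<le> (1 - D) * (?S' * ?W)"
    using hf_aux[OF D, of p] unfolding e by (simp only: mult.assoc)
  then have "?S * ?W' \<le> ?S' * ?W" using D by simp
  then show ?thesis unfolding hf_def using S S' by (simp add: field_simps)
qed

lemma Xsum:
  fixes D :: real
  shows "(\<Sum>c<CARD('n). Xf pos u D p c a) = (\<Sum>c<CARD('n). D ^ c) * (\<Sum>i\<in>UNIV. p$i * u i a)"
proof -
  let ?n = "CARD('n)"
  have "(\<Sum>c<?n. Xf pos u D p c a) = (\<Sum>i\<in>UNIV. \<Sum>c<?n. p$i * D ^ (cm ?n c (pos i - 1)) * u i a)"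
    unfolding Xf_def by (rule sum.swap)
  also have "\<dots> = (\<Sum>i\<in>UNIV. (p$i * u i a) * (\<Sum>c<?n. D ^ (cm ?n c (pos i - 1))))"
    unfolding sum_distrib_left
    by (intro sum.cong refl) (simp only: mult.assoc mult.commute mult.left_commute)
  also have "\<dots> = (\<Sum>i\<in>UNIV. (p$i * u i a) * (\<Sum>c<?n. D ^ c))"
  proof (rule sum.cong[OF refl])
    fix i
    have "(\<Sum>c<?n. D ^ (cm ?n c (pos i - 1))) = (\<Sum>c<?n. D ^ c)" by (rule sum_cm_reindex[OF npos])
    then show "(p$i * u i a) * (\<Sum>c<?n. D ^ (cm ?n c (pos i - 1))) = (p$i * u i a) * (\<Sum>c<?n. D ^ c)"
      by (rule arg_cong)
  qed
  also have "\<dots> = (\<Sum>c<?n. D ^ c) * (\<Sum>i\<in>UNIV. p$i * u i a)"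
    by (subst sum_distrib_right[symmetric]) (rule mult.commute)
  finally show ?thesis .
qed

lemma span:
  fixes D :: real and z :: "'n \<Rightarrow> real"
  assumes D: "0 < D" "D < 1" and h: "\<forall>c<CARD('n). (\<Sum>i\<in>UNIV. z i * D ^ (cm CARD('n) c (pos i - 1))) = 0"
  shows "z i0 = 0"
proof -
  let ?n = "CARD('n)"
  let ?c = "pos i0 - 1"
  have c: "?c < ?n" by (rule pos_lt)
  have c1: "cm ?n ?c 1 < ?n" by (rule cm_lt[OF npos])
  have "(\<Sum>i\<in>UNIV. z i * (D ^ (cm ?n ?c (pos i - 1)) - D * D ^ (cm ?n (cm ?n ?c 1) (pos i - 1))))
      = (\<Sum>i\<in>UNIV. z i * D ^ (cm ?n ?c (pos i - 1))) - D * (\<Sum>i\<in>UNIV. z i * D ^ (cm ?n (cm ?n ?c 1) (pos i - 1)))"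
    by (simp add: right_diff_distrib sum_subtractf sum_distrib_left mult.left_commute)
  also have "\<dots> = 0" using h c c1 by simp
  finally have z0: "(\<Sum>i\<in>UNIV. z i * (D ^ (cm ?n ?c (pos i - 1)) - D * D ^ (cm ?n (cm ?n ?c 1) (pos i - 1)))) = 0" .
  have "(\<Sum>i\<in>UNIV. z i * (D ^ (cm ?n ?c (pos i - 1)) - D * D ^ (cm ?n (cm ?n ?c 1) (pos i - 1))))
      = (\<Sum>i\<in>UNIV. if i = i0 then z i * (1 - D ^ ?n) else 0)"
  proof (rule sum.cong[OF refl])
    fix i
    have "D ^ (cm ?n ?c (pos i - 1)) - D * D ^ (cm ?n (cm ?n ?c 1) (pos i - 1)) = (if ?c = pos i - 1 then 1 - D ^ ?n else 0)"
      by (rule bracket[OF npos c pos_lt])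
    moreover have "?c = pos i - 1 \<longleftrightarrow> i = i0" using jj_inj by metis
    ultimately show "z i * (D ^ (cm ?n ?c (pos i - 1)) - D * D ^ (cm ?n (cm ?n ?c 1) (pos i - 1)))
      = (if i = i0 then z i * (1 - D ^ ?n) else 0)" by simp
  qed
  also have "\<dots> = z i0 * (1 - D ^ ?n)" by simp
  finally have "z i0 * (1 - D ^ ?n) = 0" using z0 by simp
  moreover have "1 - D ^ ?n \<noteq> 0" using Dn_lt[OF D] by simp
  ultimately show ?thesis by simp
qed

end

context game begin

lemma hf_strict:
  fixes D D' :: real
  assumes D: "0 < D" "D < D'" "D' \<le> 1"
    and pnz: "\<forall>i. p$i \<noteq> 0"
    and a1: "a1 \<in> profiles Act" and a2: "a2 \<in> profiles Act" and dif: "uvec u a1 \<noteq> uvec u a2"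
    and m1: "\<forall>a\<in>profiles Act. (\<Sum>i\<in>UNIV. p$i * u i a) \<le> (\<Sum>i\<in>UNIV. p$i * u i a1)"
    and m2: "\<forall>a\<in>profiles Act. (\<Sum>i\<in>UNIV. p$i * u i a) \<le> (\<Sum>i\<in>UNIV. p$i * u i a2)"
  shows "hf pos Act u D' p < hf pos Act u D p"
proof (rule ccontr)
  assume "\<not> ?thesis"
  then have eqh: "hf pos Act u D' p = hf pos Act u D p" using hf_mono[OF D, of p] by simp
  let ?n = "CARD('n)"
  let ?S = "\<Sum>b<?n. D ^ b" and ?S' = "\<Sum>b<?n. D' ^ b"
  let ?W = "\<Sum>b<?n. Wf pos Act u D p b" and ?W' = "\<Sum>b<?n. Wf pos Act u D' p b"
  let ?mu = "\<lambda>k. D' ^ k - D * D' ^ (cm ?n k 1)"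
  let ?P = "\<lambda>a. \<Sum>i\<in>UNIV. p$i * u i a"
  have S: "?S > 0" using D by (intro sum_pos lt_ne) auto
  have S': "?S' > 0" using D by (intro sum_pos lt_ne) auto
  have D1: "D < 1" using D by simp
  have mupos: "\<forall>k<?n. ?mu k > 0" using mu_pos[OF D] by simp
  have mu: "\<forall>k<?n. ?mu k \<ge> 0" using mupos by (simp add: less_imp_le)
  have Dn: "1 - D ^ ?n \<ge> 0" using Dn_lt[OF D(1) D1] by simp
  have SW: "?S * ?W' = ?S' * ?W" using eqh S S' unfolding hf_def by (simp add: field_simps)
  have e: "1 - D ^ ?n = (1 - D) * ?S" by (rule one_diff_power_eq)
  let ?f = "\<lambda>b. (1 - D ^ ?n) * Wf pos Act u D' p b"
  let ?g = "\<lambda>b. \<Sum>k<?n. ?mu k * Wf pos Act u D p (cm ?n b k)"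
  have le: "\<forall>b\<in>{..<?n}. ?f b \<le> ?g b" using W_conv[OF _ mu Dn] by simp
  have "sum ?f {..<?n} = (1 - D ^ ?n) * ?W'" by (rule sum_distrib_left[symmetric])
  also have "\<dots> = (1 - D) * (?S * ?W')" unfolding e by (simp only: mult.assoc)
  also have "\<dots> = ((1 - D) * ?S') * ?W" unfolding SW by (simp only: mult.assoc)
  also have "\<dots> = sum ?g {..<?n}" by (rule sum_conv_W[symmetric])
  finally have sums: "sum ?f {..<?n} = sum ?g {..<?n}" .
  have at0: "?f 0 = ?g 0" by (rule sum_eq_le_imp[OF _ le sums]) (use npos in auto)
  obtain as where as: "as \<in> profiles Act" "Xf pos u D' p 0 as = Wf pos Act u D' p 0"
    using Wf_attained by blast
  have xc: "(1 - D ^ ?n) * Xf pos u D' p 0 as = (\<Sum>k<?n. ?mu k * Xf pos u D p (cm ?n 0 k) as)"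
    by (rule X_conv[OF npos])
  have sums2: "(\<Sum>k<?n. ?mu k * Xf pos u D p (cm ?n 0 k) as) = (\<Sum>k<?n. ?mu k * Wf pos Act u D p (cm ?n 0 k))"
    using at0 xc as(2) by simp
  have le2: "\<forall>k\<in>{..<?n}. ?mu k * Xf pos u D p (cm ?n 0 k) as \<le> ?mu k * Wf pos Act u D p (cm ?n 0 k)"
    using mu Xf_le_Wf[OF as(1)] by (simp add: mult_left_mono)
  have XW: "Xf pos u D p (cm ?n 0 k) as = Wf pos Act u D p (cm ?n 0 k)" if k: "k < ?n" for k
  proof -
    have "?mu k * Xf pos u D p (cm ?n 0 k) as = ?mu k * Wf pos Act u D p (cm ?n 0 k)"
      by (rule sum_eq_le_imp[OF _ le2 sums2]) (use k in auto)
    moreover have "?mu k > 0" using mupos k by simp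
    ultimately show ?thesis by simp
  qed
  have Xmax: "Xf pos u D p c a \<le> Xf pos u D p c as" if c: "c < ?n" and a: "a \<in> profiles Act" for c a
  proof -
    have k: "cm ?n 0 c < ?n" by (rule cm_lt[OF npos])
    have "Xf pos u D p c a \<le> Wf pos Act u D p c" by (rule Xf_le_Wf[OF a])
    also have "\<dots> = Xf pos u D p c as" using XW[OF k] cm_inv[OF npos c] by simp
    finally show ?thesis .
  qed
  have same: "\<forall>c<?n. Xf pos u D p c a' = Xf pos u D p c as"
    if a': "a' \<in> profiles Act" and ma: "\<forall>a\<in>profiles Act. ?P a \<le> ?P a'" for a'
  proof -
    have l: "\<forall>c\<in>{..<?n}. Xf pos u D p c a' \<le> Xf pos u D p c as" using Xmax a' by simp
    have "(\<Sum>c<?n. Xf pos u D p c a') \<le> (\<Sum>c<?n. Xf pos u D p c as)" using l by (intro sum_mono) simp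
    moreover have "?S * ?P as \<le> ?S * ?P a'" using ma as(1) S by (intro mult_left_mono) auto
    ultimately have "(\<Sum>c<?n. Xf pos u D p c a') = (\<Sum>c<?n. Xf pos u D p c as)"
      unfolding Xsum by (rule order_antisym)
    then show ?thesis using sum_eq_le_imp[OF _ l] by auto
  qed
  have s1: "\<forall>c<?n. Xf pos u D p c a1 = Xf pos u D p c as" by (rule same[OF a1 m1])
  have s2: "\<forall>c<?n. Xf pos u D p c a2 = Xf pos u D p c as" by (rule same[OF a2 m2])
  let ?z = "\<lambda>i. p$i * (u i a1 - u i a2)"
  have h: "\<forall>c<?n. (\<Sum>i\<in>UNIV. ?z i * D ^ (cm ?n c (pos i - 1))) = 0"
  proof (intro allI impI)
    fix c assume c: "c < ?n"
    have "(\<Sum>i\<in>UNIV. ?z i * D ^ (cm ?n c (pos i - 1))) = Xf pos u D p c a1 - Xf pos u D p c a2"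
      unfolding Xf_def sum_subtractf[symmetric] by (intro sum.cong refl) (simp add: algebra_simps)
    then show "(\<Sum>i\<in>UNIV. ?z i * D ^ (cm ?n c (pos i - 1))) = 0" using s1 s2 c by simp
  qed
  have "\<forall>i. u i a1 = u i a2"
  proof
    fix i
    have "?z i = 0" by (rule span[OF D(1) D1 h])
    then show "u i a1 = u i a2" using pnz by simp
  qed
  then have "uvec u a1 = uvec u a2" unfolding uvec_def by (simp add: vec_eq_iff)
  then show False using dif by simp
qed

end

definition maxi :: "(real^'n) set \<Rightarrow> real^'n \<Rightarrow> real^'n \<Rightarrow> bool" where
  "maxi P p x \<longleftrightarrow> x \<in> P \<and> (\<forall>z\<in>P. inner p z \<le> inner p x)"

lemma path_const:
  fixes P :: "(real^'n) set" and \<sigma> :: "'n \<Rightarrow> real"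
  assumes fP: "finite P"
    and p0: "\<forall>i. \<sigma> i * p0$i > 0" and p1: "\<forall>i. \<sigma> i * p1$i > 0"
    and uniq: "\<And>p x y. (\<forall>i. \<sigma> i * p$i > 0) \<Longrightarrow> maxi P p x \<Longrightarrow> maxi P p y \<Longrightarrow> x = y"
    and x0: "maxi P p0 x0"
  shows "maxi P p1 x0"
proof -
  define pt where "pt t = (1 - t) *\<^sub>R p0 + t *\<^sub>R p1" for t :: real
  define K where "K = {0..1} \<inter> (\<Inter>z\<in>P. {t. inner (pt t) z \<le> inner (pt t) x0})"
  have x0P: "x0 \<in> P" using x0 unfolding maxi_def by simp
  have ptO: "\<forall>i. \<sigma> i * pt t $ i > 0" if t: "t \<in> {0..1}" for t
  proof
    fix i
    have "\<sigma> i * pt t $ i = (1 - t) * (\<sigma> i * p0$i) + t * (\<sigma> i * p1$i)"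
      unfolding pt_def by (simp add: algebra_simps)
    moreover have "(1 - t) * (\<sigma> i * p0$i) \<ge> 0" using t p0[rule_format, of i] by simp
    moreover have "t * (\<sigma> i * p1$i) \<ge> 0" using t p1[rule_format, of i] by simp
    moreover have "(1 - t) * (\<sigma> i * p0$i) > 0 \<or> t * (\<sigma> i * p1$i) > 0"
      using t p0[rule_format, of i] p1[rule_format, of i] by (cases "t = 1") auto
    ultimately show "\<sigma> i * pt t $ i > 0" by linarith
  qed
  have cont: "continuous_on UNIV (\<lambda>t. inner (pt t) z)" for z
    unfolding pt_def by (intro continuous_intros)
  have closedK: "closed K"
    unfolding K_def
    by (intro closed_Int closed_atLeastAtMost closed_INT ballI closed_Collect_le cont)
  have K0: "0 \<in> K" unfolding K_def pt_def using x0 unfolding maxi_def by auto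
  have Kb: "bdd_above K" unfolding K_def by (rule bdd_aboveI[of _ 1]) auto
  define ts where "ts = Sup K"
  have tsK: "ts \<in> K" unfolding ts_def using closed_contains_Sup[of K] closedK K0 Kb by blast
  have ts01: "ts \<in> {0..1}" using tsK unfolding K_def by blast
  have "ts = 1"
  proof (rule ccontr)
    assume "ts \<noteq> 1"
    then have ts1: "ts < 1" using ts01 by simp
    have mx: "maxi P (pt ts) x0" using tsK x0P unfolding K_def maxi_def by blast
    have strict: "inner (pt ts) z < inner (pt ts) x0" if z: "z \<in> P" "z \<noteq> x0" for z
    proof (rule ccontr)
      assume "\<not> ?thesis"
      then have "inner (pt ts) z = inner (pt ts) x0" using mx z unfolding maxi_def by force
      then have "maxi P (pt ts) z" using mx z unfolding maxi_def by simp
      then show False using uniq[OF ptO[OF ts01] mx] z by simp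
    qed
    have ev: "\<forall>\<^sub>F t in at_right ts. \<forall>z\<in>P. inner (pt t) z \<le> inner (pt t) x0"
    proof (rule eventually_ball_finite[OF fP], rule ballI)
      fix z assume z: "z \<in> P"
      show "\<forall>\<^sub>F t in at_right ts. inner (pt t) z \<le> inner (pt t) x0"
      proof (cases "z = x0")
        case True
        then show ?thesis by simp
      next
        case False
        have lim: "((\<lambda>t. inner (pt t) x0 - inner (pt t) z) \<longlongrightarrow> inner (pt ts) x0 - inner (pt ts) z) (at_right ts)"
          unfolding pt_def by (intro tendsto_intros)
        have "0 < inner (pt ts) x0 - inner (pt ts) z" using strict[OF z False] by simp
        from order_tendstoD(1)[OF lim this]
        show ?thesis by (rule eventually_mono) simp
      qed
    qed
    then obtain b where b: "b > ts" and bb: "\<And>y. y > ts \<Longrightarrow> y < b \<Longrightarrow> \<forall>z\<in>P. inner (pt y) z \<le> inner (pt y) x0"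
      unfolding eventually_at_right_field by blast
    define y where "y = (ts + min b 1) / 2"
    have y1: "y > ts" "y < b" "y \<le> 1" using b ts1 unfolding y_def by auto
    have "y \<in> K" unfolding K_def using bb[OF y1(1) y1(2)] y1 ts01 by auto
    then have "y \<le> ts" unfolding ts_def by (rule cSup_upper[OF _ Kb])
    then show False using y1 by simp
  qed
  then have "1 \<in> K" using tsK by simp
  then show ?thesis unfolding K_def pt_def maxi_def using x0P by simp
qed


lemma exists_maxi:
  fixes P :: "(real^'n) set"
  assumes "finite P" "P \<noteq> {}"
  shows "\<exists>x. maxi P p x"
proof -
  let ?m = "Max ((\<lambda>z. inner p z) ` P)"
  have "?m \<in> (\<lambda>z. inner p z) ` P" using assms by (intro Max_in) auto
  then obtain x where x: "x \<in> P" "inner p x = ?m" by auto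
  have "\<forall>z\<in>P. inner p z \<le> ?m" using assms by (auto intro: Max_ge)
  then show ?thesis using x unfolding maxi_def by auto
qed

lemma two_maxi:
  fixes P :: "(real^'n) set" and \<sigma> :: "'n \<Rightarrow> real"
  assumes fP: "finite P" and neP: "P \<noteq> {}"
    and sig: "\<forall>i. \<sigma> i = 1 \<or> \<sigma> i = -1"
    and nc: "\<not> (\<exists>x\<in>P. \<forall>i. \<forall>y\<in>P. \<sigma> i * y$i \<le> \<sigma> i * x$i)"
  shows "\<exists>p x y. (\<forall>i. \<sigma> i * p$i > 0) \<and> maxi P p x \<and> maxi P p y \<and> x \<noteq> y"
proof (rule ccontr)
  assume "\<not> ?thesis"
  then have uniq: "\<And>p x y. (\<forall>i. \<sigma> i * p$i > 0) \<Longrightarrow> maxi P p x \<Longrightarrow> maxi P p y \<Longrightarrow> x = y" by blast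
  have ss: "\<sigma> i * \<sigma> i = 1" for i using sig[rule_format, of i] by auto
  define p0 :: "real^'n" where "p0 = (\<chi> j. \<sigma> j)"
  have p0O: "\<forall>i. \<sigma> i * p0$i > 0" unfolding p0_def using ss by simp
  obtain x0 where x0: "maxi P p0 x0" using exists_maxi[OF fP neP] by blast
  have x0P: "x0 \<in> P" using x0 unfolding maxi_def by simp
  have "\<forall>i. \<forall>y\<in>P. \<sigma> i * y$i \<le> \<sigma> i * x0$i"
  proof (intro allI ballI)
    fix i y assume y: "y \<in> P"
    show "\<sigma> i * y$i \<le> \<sigma> i * x0$i"
    proof (rule ccontr)
      assume "\<not> ?thesis"
      then have Dd: "\<sigma> i * (y$i - x0$i) > 0" by (simp add: algebra_simps)
      define E where "E = \<bar>inner p0 (y - x0)\<bar>"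
      define e where "e = \<sigma> i * (y$i - x0$i) / (2 * (E + 1))"
      have E0: "E \<ge> 0" unfolding E_def by simp
      have e0: "e > 0" unfolding e_def using Dd E0 by simp
      define p1 :: "real^'n" where "p1 = (\<chi> j. \<sigma> j * ((if j = i then 1 else 0) + e))"
      have p1O: "\<forall>j. \<sigma> j * p1$j > 0"
      proof
        fix j
        have "\<sigma> j * p1$j = (\<sigma> j * \<sigma> j) * ((if j = i then 1 else 0) + e)" unfolding p1_def by simp
        also have "\<dots> = (if j = i then 1 else 0) + e" using ss by simp
        also have "\<dots> > 0" using e0 by simp
        finally show "\<sigma> j * p1$j > 0" .
      qed
      have m1: "maxi P p1 x0" by (rule path_const[OF fP p0O p1O uniq x0])
      have ip: "inner p1 v = \<sigma> i * v$i + e * inner p0 v" for v :: "real^'n"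
      proof -
        have "inner p1 v = (\<Sum>j\<in>UNIV. (if j = i then \<sigma> j * v$j else 0) + e * (\<sigma> j * v$j))"
          unfolding p1_def inner_vec_def by (intro sum.cong refl) (simp add: algebra_simps)
        also have "\<dots> = \<sigma> i * v$i + e * inner p0 v"
          unfolding sum.distrib p0_def inner_vec_def by (simp add: sum_distrib_left mult.commute)
        finally show ?thesis .
      qed
      have "inner p1 y \<le> inner p1 x0" using m1 y unfolding maxi_def by blast
      then have A1: "inner p1 (y - x0) \<le> 0" by (simp add: inner_diff_right)
      have "- E \<le> inner p0 (y - x0)" unfolding E_def by linarith
      then have "e * (- E) \<le> e * inner p0 (y - x0)" using e0 by (intro mult_left_mono) auto
      then have A2: "e * inner p0 (y - x0) \<ge> - (e * E)" by simp
      have A3: "e * E < \<sigma> i * (y$i - x0$i)"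
      proof -
        have "e * E = \<sigma> i * (y$i - x0$i) * (E / (2 * (E + 1)))" unfolding e_def by simp
        moreover have "E / (2 * (E + 1)) < 1" using E0 by simp
        then have "\<sigma> i * (y$i - x0$i) * (E / (2 * (E + 1))) < \<sigma> i * (y$i - x0$i) * 1"
          using Dd by (intro mult_strict_left_mono) auto
        ultimately show ?thesis by simp
      qed
      have A4: "inner p1 (y - x0) = \<sigma> i * (y$i - x0$i) + e * inner p0 (y - x0)"
        using ip[of "y - x0"] by simp
      show False using A1 A2 A3 A4 by linarith
    qed
  qed
  then show False using nc x0P by blast
qed

lemma wavg:
  fixes w v :: "nat \<Rightarrow> real"
  assumes S: "(\<Sum>k\<in>I. w k) > 0" and w: "\<forall>k\<in>I. w k \<ge> 0" and v: "\<forall>k\<in>I. lo \<le> v k \<and> v k \<le> hi"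
  shows "lo \<le> (1 / (\<Sum>k\<in>I. w k)) * (\<Sum>k\<in>I. w k * v k) \<and> (1 / (\<Sum>k\<in>I. w k)) * (\<Sum>k\<in>I. w k * v k) \<le> hi"
proof -
  let ?S = "\<Sum>k\<in>I. w k"
  have "(\<Sum>k\<in>I. w k * v k) \<le> (\<Sum>k\<in>I. w k * hi)" using w v by (intro sum_mono mult_left_mono) auto
  also have "\<dots> = ?S * hi" by (rule sum_distrib_right[symmetric])
  finally have h: "(\<Sum>k\<in>I. w k * v k) \<le> ?S * hi" .
  have "?S * lo = (\<Sum>k\<in>I. w k * lo)" by (rule sum_distrib_right)
  also have "\<dots> \<le> (\<Sum>k\<in>I. w k * v k)" using w v by (intro sum_mono mult_left_mono) auto
  finally have l: "?S * lo \<le> (\<Sum>k\<in>I. w k * v k)" .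
  show ?thesis using h l S by (simp add: field_simps)
qed

context game begin

lemma u_bounds: "a \<in> profiles Act \<Longrightarrow> Min (u i ` profiles Act) \<le> u i a \<and> u i a \<le> Max (u i ` profiles Act)"
  using A_fin by (simp add: Min_le Max_ge)

lemma Fstar_cbox: "Fstar Act u = cbox (\<chi> i. Min (u i ` profiles Act)) (\<chi> i. Max (u i ` profiles Act))"
  unfolding Fstar_def by (simp add: set_eq_iff mem_box_cart)

lemma Fstar_convex: "convex (Fstar Act u)"
  unfolding Fstar_cbox by (rule convex_box)

lemma uvec_Fstar: "a \<in> profiles Act \<Longrightarrow> uvec u a \<in> Fstar Act u"
  unfolding Fstar_def uvec_def using u_bounds by simp

lemma V_sub_Fstar: "Vset Act u \<subseteq> Fstar Act u"
  unfolding Vset_def by (rule hull_minimal) (use uvec_Fstar Fstar_convex in auto)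

lemma V_closed: "closed (Vset Act u)"
  unfolding Vset_def using A_fin
  by (intro compact_imp_closed finite_imp_compact_convex_hull finite_imageI)

lemma corner:
  assumes VF: "Vset Act u \<noteq> Fstar Act u"
  shows "\<exists>\<sigma>. (\<forall>i. \<sigma> i = 1 \<or> \<sigma> i = -1) \<and> \<not> (\<exists>a\<in>profiles Act. \<forall>i. \<forall>b\<in>profiles Act. \<sigma> i * u i b \<le> \<sigma> i * u i a)"
proof (rule ccontr)
  assume "\<not> ?thesis"
  then have allc: "\<And>\<sigma>. (\<forall>i. \<sigma> i = 1 \<or> \<sigma> i = -1) \<Longrightarrow> \<exists>a\<in>profiles Act. \<forall>i. \<forall>b\<in>profiles Act. \<sigma> i * u i b \<le> \<sigma> i * u i a"
    by blast
  have "Fstar Act u \<subseteq> Vset Act u"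
  proof
    fix y assume yF: "y \<in> Fstar Act u"
    show "y \<in> Vset Act u"
    proof (rule ccontr)
      assume yV: "y \<notin> Vset Act u"
      have cV: "convex (Vset Act u)" unfolding Vset_def by (rule convex_convex_hull)
      obtain q b0 where q: "inner q y < b0" "\<forall>x\<in>Vset Act u. b0 < inner q x"
        using separating_hyperplane_closed_point[OF cV V_closed yV] by blast
      define \<sigma> where "\<sigma> i = (if q$i \<ge> 0 then -1 else (1::real))" for i
      have "\<forall>i. \<sigma> i = 1 \<or> \<sigma> i = -1" unfolding \<sigma>_def by simp
      then obtain a where a: "a \<in> profiles Act" and ac: "\<forall>i. \<forall>b\<in>profiles Act. \<sigma> i * u i b \<le> \<sigma> i * u i a"
        using allc by blast
      have yb: "Min (u i ` profiles Act) \<le> y$i \<and> y$i \<le> Max (u i ` profiles Act)" for i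
        using yF unfolding Fstar_def by simp
      have termw: "q$i * u i a \<le> q$i * y$i" for i
      proof (cases "q$i \<ge> 0")
        case True
        have "Min (u i ` profiles Act) \<in> u i ` profiles Act" using A_fin A_ne by (intro Min_in) auto
        then obtain bm where bm: "bm \<in> profiles Act" "u i bm = Min (u i ` profiles Act)" by auto
        have "\<sigma> i * u i bm \<le> \<sigma> i * u i a" using ac bm(1) by blast
        then have "u i a \<le> u i bm" using True unfolding \<sigma>_def by simp
        then have "u i a \<le> y$i" using bm(2) yb[of i] by simp
        then show ?thesis using True by (simp add: mult_left_mono)
      next
        case False
        have "Max (u i ` profiles Act) \<in> u i ` profiles Act" using A_fin A_ne by (intro Max_in) auto
        then obtain bm where bm: "bm \<in> profiles Act" "u i bm = Max (u i ` profiles Act)" by auto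
        have "\<sigma> i * u i bm \<le> \<sigma> i * u i a" using ac bm(1) by blast
        then have "u i bm \<le> u i a" using False unfolding \<sigma>_def by simp
        then have "y$i \<le> u i a" using bm(2) yb[of i] by simp
        then show ?thesis using False by (simp add: mult_left_mono_neg)
      qed
      have "inner q (uvec u a) = (\<Sum>i\<in>UNIV. q$i * u i a)" unfolding inner_vec_sum uvec_def by simp
      also have "\<dots> \<le> (\<Sum>i\<in>UNIV. q$i * y$i)" by (intro sum_mono termw)
      also have "\<dots> = inner q y" unfolding inner_vec_sum ..
      finally have "inner q (uvec u a) \<le> inner q y" .
      moreover have "uvec u a \<in> Vset Act u" unfolding Vset_def using a by (intro hull_inc imageI)
      ultimately show False using q by force
    qed
  qed
  then show False using VF V_sub_Fstar by blast
qed

lemma S_pos: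
  fixes \<delta> :: real
  assumes T: "T > 0" and d: "\<delta> > 0"
  shows "(\<Sum>k=1..CARD('n)*T. \<delta> ^ (k - 1)) > 0"
  unfolding S_formula[OF npos T] using T d by (intro mult_pos_pos sum_pos lt_ne) auto

lemma uvec_Upay:
  fixes \<delta> :: real
  assumes T: "T > 0" and d: "\<delta> > 0"
  shows "uvec u a = Upay pos u \<delta> T (\<lambda>_. a)"
proof -
  have S: "(\<Sum>k=1..CARD('n)*T. \<delta> ^ (k - 1)) > 0" by (rule S_pos[OF T d])
  show ?thesis unfolding uvec_def Upay_def vec_eq_iff
    using S by (simp add: sum_distrib_right[symmetric])
qed

lemma Upay_Fstar:
  fixes \<delta> :: real
  assumes T: "T > 0" and d: "\<delta> > 0" and s: "\<forall>k\<in>{1..CARD('n)*T}. s k \<in> profiles Act"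
  shows "Upay pos u \<delta> T s \<in> Fstar Act u"
proof -
  have m: "CARD('n) * T > 0" using T by simp
  have pr: "per_idx (CARD('n)*T) x \<in> {1..CARD('n)*T}" for x
    unfolding per_idx_def using m by (auto simp: Suc_leI)
  have "Min (u i ` profiles Act) \<le> Upay pos u \<delta> T s $ i \<and> Upay pos u \<delta> T s $ i \<le> Max (u i ` profiles Act)" for i
    unfolding Upay_def vec_lambda_beta
    by (rule wavg[OF S_pos[OF T d]]) (use d s pr u_bounds in auto)
  then show ?thesis unfolding Fstar_def by simp
qed

lemma Fset_sub_Fstar:
  fixes \<delta> :: real
  assumes T: "T > 0" and d: "\<delta> > 0"
  shows "Fset pos Act u \<delta> T \<subseteq> Fstar Act u"
  unfolding Fset_def by (rule hull_minimal) (use Upay_Fstar[OF T d] Fstar_convex in auto)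

lemma V_sub_Fset:
  fixes \<delta> :: real
  assumes T: "T > 0" and d: "\<delta> > 0"
  shows "Vset Act u \<subseteq> Fset pos Act u \<delta> T"
  unfolding Vset_def Fset_def
proof (rule hull_mono)
  show "uvec u ` profiles Act \<subseteq> {Upay pos u \<delta> T s |s. \<forall>k\<in>{1..CARD('n) * T}. s k \<in> profiles Act}"
  proof
    fix x assume "x \<in> uvec u ` profiles Act"
    then obtain a where a: "a \<in> profiles Act" "x = uvec u a" by blast
    then show "x \<in> {Upay pos u \<delta> T s |s. \<forall>k\<in>{1..CARD('n) * T}. s k \<in> profiles Act}"
      using uvec_Upay[OF T d, of a] by blast
  qed
qed

end

lemma ipu: "inner p (uvec u a) = (\<Sum>i\<in>UNIV. p$i * u i a)"
  unfolding inner_vec_sum uvec_def by simp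

theorem proposition1:
  fixes pos :: "'n::finite \<Rightarrow> nat"
    and Act :: "'n \<Rightarrow> 'a set"
    and u :: "'n \<Rightarrow> ('n \<Rightarrow> 'a) \<Rightarrow> real"
  assumes n2: "CARD('n) \<ge> 2"
    and pos: "bij_betw pos UNIV {1..CARD('n)}"
    and fin: "\<And>i. finite (Act i)"
    and ne: "\<And>i. Act i \<noteq> {}"
  shows "(Vset Act u \<noteq> Fstar Act u \<longrightarrow>
            (\<forall>\<delta> \<delta>' T T'. \<delta> \<in> {0<..1} \<and> \<delta>' \<in> {0<..1} \<and> T \<ge> 1 \<and> T' \<ge> 1
                \<and> \<delta> ^ T < \<delta>' ^ T' \<longrightarrow> Fset pos Act u \<delta>' T' \<subset> Fset pos Act u \<delta> T))
       \<and> (Vset Act u = Fstar Act u \<longrightarrow>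
            (\<forall>\<delta> T. \<delta> \<in> {0<..1} \<and> T \<ge> 1 \<longrightarrow> Fset pos Act u \<delta> T = Vset Act u))"
proof (intro conjI impI allI)
  interpret g: game pos Act u by (rule game.intro[OF pos fin ne])
  {
    fix \<delta> \<delta>' :: real and T T' :: nat
    assume VF: "Vset Act u \<noteq> Fstar Act u"
      and H: "\<delta> \<in> {0<..1} \<and> \<delta>' \<in> {0<..1} \<and> T \<ge> 1 \<and> T' \<ge> 1 \<and> \<delta> ^ T < \<delta>' ^ T'"
    have d: "\<delta> > 0" and d': "\<delta>' > 0" "\<delta>' \<le> 1" and T: "T > 0" and T': "T' > 0"
      and DD: "\<delta> ^ T < \<delta>' ^ T'" using H by auto
    have D: "0 < \<delta> ^ T" "\<delta> ^ T < \<delta>' ^ T'" "\<delta>' ^ T' \<le> 1"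
      using d DD d' by (simp_all add: power_le_one)
    let ?F = "Fset pos Act u \<delta> T" and ?F' = "Fset pos Act u \<delta>' T'"
    let ?gen = "{Upay pos u \<delta> T s |s. \<forall>k\<in>{1..CARD('n) * T}. s k \<in> profiles Act}"
    have genF: "Upay pos u \<delta> T s \<in> ?F" if "\<forall>k. s k \<in> profiles Act" for s
      unfolding Fset_def using that by (intro hull_inc) blast
    have sub: "?F' \<subseteq> ?F"
      unfolding Fset_def[of pos Act u \<delta>' T']
    proof (rule hull_minimal)
      show "convex ?F" unfolding Fset_def by (rule convex_convex_hull)
      show "{Upay pos u \<delta>' T' s |s. \<forall>k\<in>{1..CARD('n) * T'}. s k \<in> profiles Act} \<subseteq> ?F"
      proof
        fix x assume "x \<in> {Upay pos u \<delta>' T' s |s. \<forall>k\<in>{1..CARD('n) * T'}. s k \<in> profiles Act}"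
        then obtain s where x: "x = Upay pos u \<delta>' T' s" and s: "\<forall>k\<in>{1..CARD('n) * T'}. s k \<in> profiles Act"
          by blast
        show "x \<in> ?F"
        proof (rule ccontr)
          assume xF: "x \<notin> ?F"
          have cF: "convex ?F" unfolding Fset_def by (rule convex_convex_hull)
          have clF: "closed ?F" by (rule compact_imp_closed[OF g.Fset_compact[OF T]])
          obtain q b0 where q: "inner q x < b0" "\<forall>z\<in>?F. b0 < inner q z"
            using separating_hyperplane_closed_point[OF cF clF xF] by blast
          obtain s0 where s0: "\<forall>k. s0 k \<in> profiles Act" "inner (-q) (Upay pos u \<delta> T s0) = hf pos Act u (\<delta> ^ T) (-q)"
            using g.attain[OF T d, of "-q"] by blast
          have "b0 < inner q (Upay pos u \<delta> T s0)" using q(2) genF[OF s0(1)] by blast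
          then have l1: "b0 < - hf pos Act u (\<delta> ^ T) (-q)" using s0(2) by simp
          have "inner (-q) x \<le> hf pos Act u (\<delta>' ^ T') (-q)" unfolding x by (rule g.upper[OF T' d'(1) s])
          also have "\<dots> \<le> hf pos Act u (\<delta> ^ T) (-q)" by (rule g.hf_mono[OF D])
          finally have "- hf pos Act u (\<delta> ^ T) (-q) \<le> inner q x" by simp
          then show False using l1 q(1) by linarith
        qed
      qed
    qed
    have neq: "?F' \<noteq> ?F"
    proof
      assume eqF: "?F' = ?F"
      obtain \<sigma> where sig: "\<forall>i. \<sigma> i = 1 \<or> \<sigma> i = -1"
        and nc0: "\<not> (\<exists>a\<in>profiles Act. \<forall>i. \<forall>b\<in>profiles Act. \<sigma> i * u i b \<le> \<sigma> i * u i a)"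
        using g.corner[OF VF] by blast
      let ?P = "uvec u ` profiles Act"
      have fP: "finite ?P" using g.A_fin by simp
      have neP: "?P \<noteq> {}" using g.A_ne by simp
      have nc: "\<not> (\<exists>x\<in>?P. \<forall>i. \<forall>y\<in>?P. \<sigma> i * y$i \<le> \<sigma> i * x$i)"
      proof
        assume "\<exists>x\<in>?P. \<forall>i. \<forall>y\<in>?P. \<sigma> i * y$i \<le> \<sigma> i * x$i"
        then obtain a where a: "a \<in> profiles Act" and ax: "\<forall>i. \<forall>y\<in>?P. \<sigma> i * y$i \<le> \<sigma> i * (uvec u a)$i"
          by blast
        have "\<forall>i. \<forall>b\<in>profiles Act. \<sigma> i * u i b \<le> \<sigma> i * u i a"
        proof (intro allI ballI)
          fix i b assume b: "b \<in> profiles Act"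
          have "\<sigma> i * (uvec u b)$i \<le> \<sigma> i * (uvec u a)$i" using ax b by blast
          then show "\<sigma> i * u i b \<le> \<sigma> i * u i a" unfolding uvec_def by simp
        qed
        then show False using nc0 a by blast
      qed
      obtain p x y where p: "\<forall>i. \<sigma> i * p$i > 0" and mx: "maxi ?P p x" and my: "maxi ?P p y" and xy: "x \<noteq> y"
        using two_maxi[OF fP neP sig nc] by blast
      obtain a1 where a1: "a1 \<in> profiles Act" "x = uvec u a1" using mx unfolding maxi_def by blast
      obtain a2 where a2: "a2 \<in> profiles Act" "y = uvec u a2" using my unfolding maxi_def by blast
      have pnz: "\<forall>i. p$i \<noteq> 0"
      proof
        fix i show "p$i \<noteq> 0" using p[rule_format, of i] by auto
      qed
      have m1: "\<forall>a\<in>profiles Act. (\<Sum>i\<in>UNIV. p$i * u i a) \<le> (\<Sum>i\<in>UNIV. p$i * u i a1)"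
      proof
        fix a assume a: "a \<in> profiles Act"
        have "uvec u a \<in> ?P" using a by (rule imageI)
        moreover have "\<forall>z\<in>?P. inner p z \<le> inner p (uvec u a1)" using mx unfolding maxi_def a1(2) by (rule conjunct2)
        ultimately have "inner p (uvec u a) \<le> inner p (uvec u a1)" by (rule bspec[rotated])
        then show "(\<Sum>i\<in>UNIV. p$i * u i a) \<le> (\<Sum>i\<in>UNIV. p$i * u i a1)" by (simp only: ipu)
      qed
      have m2: "\<forall>a\<in>profiles Act. (\<Sum>i\<in>UNIV. p$i * u i a) \<le> (\<Sum>i\<in>UNIV. p$i * u i a2)"
      proof
        fix a assume a: "a \<in> profiles Act"
        have "uvec u a \<in> ?P" using a by (rule imageI)
        moreover have "\<forall>z\<in>?P. inner p z \<le> inner p (uvec u a2)" using my unfolding maxi_def a2(2) by (rule conjunct2)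
        ultimately have "inner p (uvec u a) \<le> inner p (uvec u a2)" by (rule bspec[rotated])
        then show "(\<Sum>i\<in>UNIV. p$i * u i a) \<le> (\<Sum>i\<in>UNIV. p$i * u i a2)" by (simp only: ipu)
      qed
      have strict: "hf pos Act u (\<delta>' ^ T') p < hf pos Act u (\<delta> ^ T) p"
        by (rule g.hf_strict[OF D pnz a1(1) a2(1)]) (use xy a1 a2 m1 m2 in auto)
      obtain s0 where s0: "\<forall>k. s0 k \<in> profiles Act" "inner p (Upay pos u \<delta> T s0) = hf pos Act u (\<delta> ^ T) p"
        using g.attain[OF T d, of p] by blast
      have "Upay pos u \<delta> T s0 \<in> ?F'" using genF[OF s0(1)] eqF by simp
      then have "inner p (Upay pos u \<delta> T s0) \<le> hf pos Act u (\<delta>' ^ T') p"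
        by (rule g.hull_upper[OF T' d'(1)])
      then show False using s0(2) strict by simp
    qed
    show "?F' \<subset> ?F" using sub neq by blast
  }
  {
    fix \<delta> :: real and T :: nat
    assume VF: "Vset Act u = Fstar Act u" and H: "\<delta> \<in> {0<..1} \<and> T \<ge> 1"
    have d: "\<delta> > 0" and T: "T > 0" using H by auto
    show "Fset pos Act u \<delta> T = Vset Act u"
      using g.Fset_sub_Fstar[OF T d] g.V_sub_Fset[OF T d] VF by blast
  }
qed

end
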